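(* Let $f\in\mathcal X_M'$ satisfy $f(0)=1$ and $\mathcal D_f\ne\{0\}$. Then for every $k\in\mathbb N$ the set $A_k(f)$ is $\tau_{AW}$-open in $\mathcal X_M'$, contains $f$, and is convex (if $g,h\in A_k(f)$ and $a\in[0,1]$ then $ag+(1-a)h\in A_k(f)$); moreover $\{A_k(f)\}_{k\in\mathbb N}$ is a local base for $\tau_{AW}$ at $f$ (indeed $A_{2k}(f)\subset V_k(f)$).
   Context: For $f:\mathbb R\to[-\infty,\infty]$, $\mathrm{epi}(f)=\{(\theta,b):b\ge f(\theta)\}$, $\mathcal D_f=\{\theta:f(\theta)<\infty\}$. On $\mathbb R^2$ use the box metric $d(x,y)=\max(|x_1-y_1|,|x_2-y_2|)$, $d(x,A)=\inf_{y\in A}d(x,y)$, $B_r=\{x:d(0,x)<r\}$, $\overline B_r=\{x:d(0,x)\le r\}$. $\mathcal X_M'$ is the set of lower semicontinuous convex $f:\mathbb R\to[0,\infty]$ with $f(0)<\infty$, with the Attouch–Wets topology $\tau_{AW}$, whose local base at $f$ is $V_k(f)=\{g\in\mathcal X_M':\sup_{x\in\overline B_k}|d(x,\mathrm{epi}(g))-d(x,\mathrm{epi}(f))|<1/k\}$, $k\in\mathbb N$. For $f\in\mathcal X_M'$ with $f(0)=1$, $\mathcal D_f\ne\{0\}$ and $k\in\mathbb N$: let $\eta_{l}=\inf\{\theta:(\theta,f(\theta))\in B_{2k+2}\}$, $\eta_{r}=\sup\{\theta:(\theta,f(\theta))\in B_{2k+2}\}$; fix $0<\epsilon<(\eta_r-\eta_l)/2$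 such that $d((a,f(a)),(b,f(b)))<1/(2k)$ for all $a,b\in[\eta_l,\eta_l+\epsilon]$ and for all $a,b\in[\eta_r-\epsilon,\eta_r]$; define $f^\sharp_k(\theta)=f(\theta)+1/(2k)$ for $\theta\in[\eta_l+\epsilon,\eta_r-\epsilon]$ and $f^\sharp_k(\theta)=+\infty$ otherwise. For $g$ let $\theta_{g,l}=\inf\mathcal D_g$, $\theta_{g,r}=\sup\mathcal D_g$; write $h\lll g$ if $\theta_{h,l}<\theta_{g,l}$, $\theta_{g,r}<\theta_{h,r}$ and $h(\theta)<g(\theta)$ for all $\theta\in[\theta_{g,l},\theta_{g,r}]$. Let $W(g)=\{h\in\mathcal X_M':h\lll g\}$ and $A_k(f)=V_k(f^\sharp_k)\cap W(f^\sharp_k)$. *)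

theory Defs
  imports "HOL-Analysis.Analysis"
begin

definition epi :: "(real \<Rightarrow> ereal) \<Rightarrow> (real \<times> real) set" where
  "epi f = {(\<theta>, b). ereal b \<ge> f \<theta>}"

definition dom_f :: "(real \<Rightarrow> ereal) \<Rightarrow> real set" where
  "dom_f f = {\<theta>. f \<theta> < \<infinity>}"

definition bdist :: "real \<times> real \<Rightarrow> real \<times> real \<Rightarrow> real" where
  "bdist x y = max \<bar>fst x - fst y\<bar> \<bar>snd x - snd y\<bar>"

definition bsetdist :: "real \<times> real \<Rightarrow> (real \<times> real) set \<Rightarrow> real" where
  "bsetdist x A = (INF y\<in>A. bdist x y)"

definition bball :: "real \<Rightarrow> (real \<times> real) set" where
  "bball r = {x. bdist (0,0) x < r}"

definition bcball :: "real \<Rightarrow> (real \<times> real) set" where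
  "bcball r = {x. bdist (0,0) x \<le> r}"

definition lsc :: "(real \<Rightarrow> ereal) \<Rightarrow> bool" where
  "lsc f \<longleftrightarrow> (\<forall>x. f x \<le> Liminf (at x) f)"

definition convex_fun :: "(real \<Rightarrow> ereal) \<Rightarrow> bool" where
  "convex_fun f \<longleftrightarrow> (\<forall>x y a. 0 < a \<and> a < 1 \<longrightarrow>
      f (a * x + (1 - a) * y) \<le> ereal a * f x + ereal (1 - a) * f y)"

definition XM :: "(real \<Rightarrow> ereal) set" where
  "XM = {f. lsc f \<and> convex_fun f \<and> (\<forall>\<theta>. f \<theta> \<ge> 0) \<and> f 0 < \<infinity>}"

definition Vk :: "nat \<Rightarrow> (real \<Rightarrow> ereal) \<Rightarrow> (real \<Rightarrow> ereal) set" where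
  "Vk k f = {g\<in>XM. (SUP x\<in>bcball (real k).
        \<bar>bsetdist x (epi g) - bsetdist x (epi f)\<bar>) < 1 / real k}"

definition aw_open :: "(real \<Rightarrow> ereal) set \<Rightarrow> bool" where
  "aw_open U \<longleftrightarrow> U \<subseteq> XM \<and> (\<forall>f\<in>U. \<exists>k\<ge>1. Vk k f \<subseteq> U)"

definition graph_pts :: "(real \<Rightarrow> ereal) \<Rightarrow> nat \<Rightarrow> real set" where
  "graph_pts f k = {\<theta>. f \<theta> < \<infinity> \<and>
      (\<theta>, real_of_ereal (f \<theta>)) \<in> bball (2 * real k + 2)}"

definition eta_l :: "(real \<Rightarrow> ereal) \<Rightarrow> nat \<Rightarrow> real" where
  "eta_l f k = Inf (graph_pts f k)"

definition eta_r :: "(real \<Rightarrow> ereal) \<Rightarrow> nat \<Rightarrow> real" where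
  "eta_r f k = Sup (graph_pts f k)"

definition eps_ok :: "(real \<Rightarrow> ereal) \<Rightarrow> nat \<Rightarrow> real \<Rightarrow> bool" where
  "eps_ok f k \<epsilon> \<longleftrightarrow> 0 < \<epsilon> \<and> \<epsilon> < (eta_r f k - eta_l f k) / 2 \<and>
     (\<forall>a\<in>{eta_l f k .. eta_l f k + \<epsilon>}. \<forall>b\<in>{eta_l f k .. eta_l f k + \<epsilon>}.
        f a < \<infinity> \<and> f b < \<infinity> \<and>
        bdist (a, real_of_ereal (f a)) (b, real_of_ereal (f b)) < 1 / (2 * real k)) \<and>
     (\<forall>a\<in>{eta_r f k - \<epsilon> .. eta_r f k}. \<forall>b\<in>{eta_r f k - \<epsilon> .. eta_r f k}.
        f a < \<infinity> \<and> f b < \<infinity> \<and>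
        bdist (a, real_of_ereal (f a)) (b, real_of_ereal (f b)) < 1 / (2 * real k))"

definition fsharp :: "(real \<Rightarrow> ereal) \<Rightarrow> nat \<Rightarrow> real \<Rightarrow> real \<Rightarrow> ereal" where
  "fsharp f k \<epsilon> \<theta> = (if \<theta> \<in> {eta_l f k + \<epsilon> .. eta_r f k - \<epsilon>}
      then f \<theta> + ereal (1 / (2 * real k)) else \<infinity>)"

definition theta_l :: "(real \<Rightarrow> ereal) \<Rightarrow> ereal" where
  "theta_l g = Inf (ereal ` dom_f g)"

definition theta_r :: "(real \<Rightarrow> ereal) \<Rightarrow> ereal" where
  "theta_r g = Sup (ereal ` dom_f g)"

definition below :: "(real \<Rightarrow> ereal) \<Rightarrow> (real \<Rightarrow> ereal) \<Rightarrow> bool" where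
  "below h g \<longleftrightarrow> theta_l h < theta_l g \<and> theta_r g < theta_r h \<and>
     (\<forall>\<theta>. theta_l g \<le> ereal \<theta> \<and> ereal \<theta> \<le> theta_r g \<longrightarrow> h \<theta> < g \<theta>)"

definition W :: "(real \<Rightarrow> ereal) \<Rightarrow> (real \<Rightarrow> ereal) set" where
  "W g = {h\<in>XM. below h g}"

definition Ak :: "nat \<Rightarrow> real \<Rightarrow> (real \<Rightarrow> ereal) \<Rightarrow> (real \<Rightarrow> ereal) set" where
  "Ak k \<epsilon> f = Vk k (fsharp f k \<epsilon>) \<inter> W (fsharp f k \<epsilon>)"

end

theory Submission
  imports Defs
begin


lemma bdist_nonneg: "0 \<le> bdist x y" by (simp add: bdist_def)
lemma bdist_self[simp]: "bdist x x = 0" by (simp add: bdist_def)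
lemma bdist_sym: "bdist x y = bdist y x" by (simp add: bdist_def abs_minus_commute)
lemma bdist_tri: "bdist x z \<le> bdist x y + bdist y z"
  unfolding bdist_def by (auto simp: max_def abs_if split: if_splits)
lemma bdist_pair: "bdist (a,b) (c,d) = max \<bar>a-c\<bar> \<bar>b-d\<bar>" by (simp add: bdist_def)

lemma bsetdist_nonneg: "E \<noteq> {} \<Longrightarrow> 0 \<le> bsetdist x E"
  unfolding bsetdist_def by (rule cINF_greatest) (auto simp: bdist_nonneg)

lemma bsetdist_le: "p \<in> E \<Longrightarrow> bsetdist x E \<le> bdist x p"
  unfolding bsetdist_def by (rule cINF_lower) (auto intro: bdd_belowI[of _ 0] simp: bdist_nonneg)

lemma bsetdist_ge: "E \<noteq> {} \<Longrightarrow> (\<And>y. y \<in> E \<Longrightarrow> c \<le> bdist x y) \<Longrightarrow> c \<le> bsetdist x E"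
  unfolding bsetdist_def by (rule cINF_greatest) auto

lemma bsetdist_lessD: "E \<noteq> {} \<Longrightarrow> bsetdist x E < r \<Longrightarrow> \<exists>y\<in>E. bdist x y < r"
  unfolding bsetdist_def using cInf_lessD[of "(\<lambda>y. bdist x y) ` E" r] by auto

lemma bsetdist_mem: "p \<in> E \<Longrightarrow> bsetdist p E = 0"
  using bsetdist_le[of p E p] bsetdist_nonneg[of E p] by auto

lemma bcball_mem: "x \<in> bcball r \<longleftrightarrow> \<bar>fst x\<bar> \<le> r \<and> \<bar>snd x\<bar> \<le> r"
  by (simp add: bcball_def bdist_def)

lemma bdd_dist:
  assumes "E \<noteq> {}" "F \<noteq> {}"
  shows "bdd_above ((\<lambda>x. \<bar>bsetdist x E - bsetdist x F\<bar>) ` bcball r)"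
proof -
  obtain p q where pq: "p \<in> E" "q \<in> F" using assms by auto
  show ?thesis
  proof (rule bdd_aboveI2)
    fix x assume x: "x \<in> bcball r"
    have bx: "bdist (0,0) x \<le> r" using x by (simp add: bcball_def)
    have 1: "bdist x p \<le> r + bdist (0,0) p" using bdist_tri[of x p "(0,0)"] bdist_sym[of x "(0,0)"] bx by linarith
    have 2: "bdist x q \<le> r + bdist (0,0) q" using bdist_tri[of x q "(0,0)"] bdist_sym[of x "(0,0)"] bx by linarith
    have "\<bar>bsetdist x E - bsetdist x F\<bar> \<le> bsetdist x E + bsetdist x F"
      using bsetdist_nonneg[OF assms(1), of x] bsetdist_nonneg[OF assms(2), of x] by linarith
    also have "\<dots> \<le> bdist x p + bdist x q" using bsetdist_le[OF pq(1)] bsetdist_le[OF pq(2)] add_mono by blast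
    finally show "\<bar>bsetdist x E - bsetdist x F\<bar> \<le> 2*r + bdist (0,0) p + bdist (0,0) q" using 1 2 by linarith
  qed
qed

lemma bcball_ne: "0 \<le> r \<Longrightarrow> bcball r \<noteq> {}"
proof -
  assume "0 \<le> r" then have "(0,0) \<in> bcball r" by (simp add: bcball_def bdist_def)
  then show ?thesis by auto
qed

lemma sup_le:
  assumes "0 \<le> r" "\<And>x. x \<in> bcball r \<Longrightarrow> \<bar>bsetdist x E - bsetdist x F\<bar> \<le> c"
  shows "(SUP x\<in>bcball r. \<bar>bsetdist x E - bsetdist x F\<bar>) \<le> c"
  by (rule cSUP_least) (use assms bcball_ne in auto)

lemma sup_ge:
  assumes "E \<noteq> {}" "F \<noteq> {}" "x \<in> bcball r"
  shows "\<bar>bsetdist x E - bsetdist x F\<bar> \<le> (SUP x\<in>bcball r. \<bar>bsetdist x E - bsetdist x F\<bar>)"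
  by (rule cSUP_upper) (use assms bdd_dist in auto)

lemma epi_mem: "(t, b) \<in> epi g \<longleftrightarrow> g t \<le> ereal b" by (simp add: epi_def)

lemma XM_epi_ne: "g \<in> XM \<Longrightarrow> epi g \<noteq> {}"
proof -
  assume "g \<in> XM"
  then have "g 0 < \<infinity>" "g 0 \<ge> 0" by (auto simp: XM_def)
  then have "(0, real_of_ereal (g 0)) \<in> epi g" by (simp add: epi_def ereal_real)
  then show ?thesis by auto
qed



lemma conv_le:
  assumes cv: "convex_fun g" and xz: "x < z" and zy: "z < y"
    and gx: "g x \<le> ereal K" and gy: "g y \<le> ereal K"
  shows "g z \<le> ereal K"
proof -
  define a where "a = (y - z) / (y - x)"
  have a01: "0 < a" "a < 1" using xz zy by (auto simp: a_def field_simps)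
  have "a * (y - x) = y - z" using xz zy by (simp add: a_def)
  then have zeq: "z = a * x + (1 - a) * y" by (simp add: algebra_simps)
  have "g z \<le> ereal a * g x + ereal (1 - a) * g y" using cv a01 zeq unfolding convex_fun_def by blast
  also have "\<dots> \<le> ereal a * ereal K + ereal (1 - a) * ereal K"
    by (rule add_mono; rule ereal_mult_left_mono) (use a01 gx gy in auto)
  also have "\<dots> = ereal K" by (simp add: algebra_simps)
  finally show ?thesis .
qed

lemma conv_fin:
  assumes cv: "convex_fun g" and nn: "\<And>t. g t \<ge> 0" and "x \<le> z" "z \<le> y"
    and gx: "g x < \<infinity>" and gy: "g y < \<infinity>"
  shows "g z < \<infinity>"
proof -
  consider "z = x" | "z = y" | "x < z \<and> z < y" using assms by linarith
  then show ?thesis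
  proof cases
    case 3
    define K where "K = max (real_of_ereal (g x)) (real_of_ereal (g y))"
    have "g x \<le> ereal K" "g y \<le> ereal K" using gx gy nn[of x] nn[of y]
    proof -
      have "g x = ereal (real_of_ereal (g x))" "g y = ereal (real_of_ereal (g y))"
        using gx gy nn[of x] nn[of y] by (simp_all add: ereal_real)
      then show "g x \<le> ereal K" "g y \<le> ereal K" unfolding K_def
        by (metis ereal_less_eq(3) max.cobounded1 max.cobounded2)+
    qed
    then have "g z \<le> ereal K" using conv_le[OF cv] 3 by blast
    then show ?thesis by (rule order.strict_trans1) simp
  qed (use assms in auto)
qed

lemma lsc_open:
  assumes "lsc f" shows "open {t. c < f t}"
  unfolding open_contains_ball
proof (intro ballI)
  fix t assume "t \<in> {t. c < f t}"
  then have "c < Liminf (at t) f" using assms unfolding lsc_def by (metis less_le_trans mem_Collect_eq)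
  then have "eventually (\<lambda>y. c < f y) (at t)" by (rule less_LiminfD)
  then obtain d where d: "d > 0" "\<And>y. y \<noteq> t \<Longrightarrow> dist y t < d \<Longrightarrow> c < f y"
    unfolding eventually_at by blast
  have "ball t d \<subseteq> {t. c < f t}"
  proof
    fix y assume "y \<in> ball t d"
    then have "dist y t < d" by (simp add: dist_commute)
    then show "y \<in> {t. c < f t}" using d \<open>t \<in> {t. c < f t}\<close> by (cases "y = t") auto
  qed
  then show "\<exists>e>0. ball t e \<subseteq> {t. c < f t}" using d by blast
qed

lemma lsc_attains_min:
  assumes lsc: "lsc f" and nn: "\<And>t. f t \<ge> 0" and pq: "p \<le> q"
  shows "\<exists>s\<in>{p..q}. \<forall>t\<in>{p..q}. f s \<le> f t"
proof (rule ccontr)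
  assume H: "\<not> ?thesis"
  define m where "m = Inf (f ` {p..q})"
  have m_le: "\<And>t. t \<in> {p..q} \<Longrightarrow> m \<le> f t" unfolding m_def by (rule Inf_lower) auto
  have m_less: "\<And>t. t \<in> {p..q} \<Longrightarrow> m < f t"
  proof -
    fix t assume t: "t \<in> {p..q}"
    have "\<not> (\<forall>s\<in>{p..q}. f t \<le> f s)" using H t by blast
    then obtain s where s: "s \<in> {p..q}" "\<not> f t \<le> f s" by blast
    then have "f s < f t" by simp
    moreover have "m \<le> f s" using m_le s(1) .
    ultimately show "m < f t" by (rule order.strict_trans1[rotated])
  qed
  have m0: "0 \<le> m" unfolding m_def by (rule Inf_greatest) (use nn in auto)
  have mfin: "m < \<infinity>" using m_less[of p] pq by auto
  obtain M where mM: "m = ereal M" using m0 mfin by (cases m) auto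
  define U where "U = (\<lambda>n::nat. {t. ereal (M + 1 / real (Suc n)) < f t})"
  have opn: "\<And>n. open (U n)" unfolding U_def by (rule lsc_open[OF lsc])
  have cov: "{p..q} \<subseteq> (\<Union>n\<in>UNIV. U n)"
  proof
    fix t assume t: "t \<in> {p..q}"
    show "t \<in> (\<Union>n\<in>UNIV. U n)"
    proof (cases "f t = \<infinity>")
      case True then show ?thesis by (auto simp: U_def)
    next
      case False
      obtain r where r: "f t = ereal r" using False nn[of t] by (cases "f t") auto
      have "M < r" using m_less[OF t] mM r by simp
      then obtain n where n: "1 / real (Suc n) < r - M"
        using reals_Archimedean[of "r - M"] by (auto simp: inverse_eq_divide)
      have "ereal (M + 1 / real (Suc n)) < f t" using n r by simp
      then show ?thesis by (auto simp: U_def)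
    qed
  qed
  obtain C where C: "finite C" "{p..q} \<subseteq> (\<Union>n\<in>C. U n)"
  proof -
    obtain C' where "C' \<subseteq> UNIV" "finite C'" "{p..q} \<subseteq> (\<Union>c\<in>C'. U c)"
      by (rule compactE_image[OF compact_Icc, of UNIV U, OF opn cov])
    then show ?thesis using that by blast
  qed
  define N where "N = Max (insert 0 C)"
  have mono: "\<And>n. n \<in> C \<Longrightarrow> U n \<subseteq> U N"
  proof -
    fix n assume "n \<in> C"
    then have "n \<le> N" using C(1) unfolding N_def by auto
    then have "1 / real (Suc N) \<le> 1 / real (Suc n)" by (simp add: frac_le)
    then have le: "ereal (M + 1 / real (Suc N)) \<le> ereal (M + 1 / real (Suc n))" by simp
    show "U n \<subseteq> U N"
    proof
      fix t assume "t \<in> U n"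
      then have "ereal (M + 1/real(Suc n)) < f t" by (simp add: U_def)
      then show "t \<in> U N" unfolding U_def using order.strict_trans1[OF le] by simp
    qed
  qed
  have "\<And>t. t \<in> {p..q} \<Longrightarrow> ereal (M + 1 / real (Suc N)) \<le> f t"
  proof -
    fix t assume "t \<in> {p..q}"
    then obtain n where "n \<in> C" "t \<in> U n" using C(2) by blast
    then have "t \<in> U N" using mono by blast
    then show "ereal (M + 1 / real (Suc N)) \<le> f t" unfolding U_def by simp
  qed
  then have "ereal (M + 1 / real (Suc N)) \<le> m" unfolding m_def by (intro Inf_greatest) auto
  then show False using mM by simp
qed



lemma ereal_fin: "g t < \<infinity> \<Longrightarrow> g t \<ge> 0 \<Longrightarrow> g t = ereal (real_of_ereal (g t))"
  by (cases "g t") auto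

locale FK =
  fixes f :: "real \<Rightarrow> ereal" and k :: nat and \<epsilon> :: real
  assumes fX: "f \<in> XM" and f0: "f 0 = 1" and k1: "k \<ge> 1" and ok: "eps_ok f k \<epsilon>"
begin

abbreviation "L \<equiv> eta_l f k"
abbreviation "R \<equiv> eta_r f k"
abbreviation "e \<equiv> 1 / (2 * real k)"
abbreviation "\<phi> \<equiv> fsharp f k \<epsilon>"

lemma f_nn: "f t \<ge> 0" using fX by (simp add: XM_def)
lemma f_cv: "convex_fun f" using fX by (simp add: XM_def)
lemma f_lsc: "lsc f" using fX by (simp add: XM_def)

lemma e_pos: "e > 0" using k1 by simp

lemma eps_facts: "0 < \<epsilon>" "\<epsilon> < (R - L) / 2"
  using ok by (auto simp: eps_ok_def)

lemma ord: "L < L + \<epsilon>" "L + \<epsilon> < R - \<epsilon>" "R - \<epsilon> < R"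
  using eps_facts by auto

lemma pair_l: "a \<in> {L..L+\<epsilon>} \<Longrightarrow> b \<in> {L..L+\<epsilon>} \<Longrightarrow> f a < \<infinity> \<and> f b < \<infinity> \<and>
   \<bar>a - b\<bar> < e \<and> \<bar>real_of_ereal (f a) - real_of_ereal (f b)\<bar> < e"
  using ok unfolding eps_ok_def bdist_pair by auto

lemma pair_r: "a \<in> {R-\<epsilon>..R} \<Longrightarrow> b \<in> {R-\<epsilon>..R} \<Longrightarrow> f a < \<infinity> \<and> f b < \<infinity> \<and>
   \<bar>a - b\<bar> < e \<and> \<bar>real_of_ereal (f a) - real_of_ereal (f b)\<bar> < e"
  using ok unfolding eps_ok_def bdist_pair by auto

lemma eps_small: "\<epsilon> < e"
  using pair_l[of L "L+\<epsilon>"] ord by auto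

lemma f_fin: "t \<in> {L..R} \<Longrightarrow> f t < \<infinity>"
  using conv_fin[OF f_cv f_nn, of L t R] pair_l[of L L] pair_r[of R R] ord by auto

lemma f_eq: "t \<in> {L..R} \<Longrightarrow> f t = ereal (real_of_ereal (f t))"
  using ereal_fin[of f t] f_fin f_nn by auto

lemma F_nn: "0 \<le> real_of_ereal (f t)"
  using f_nn[of t] by (simp add: real_of_ereal_pos)

lemma graph_bnd: "\<theta> \<in> graph_pts f k \<Longrightarrow> \<bar>\<theta>\<bar> < 2 * real k + 2"
  by (auto simp: graph_pts_def bball_def bdist_def)

lemma graph_0: "0 \<in> graph_pts f k"
  using f0 by (simp add: graph_pts_def bball_def bdist_def)

lemma graph_LR: "\<theta> \<in> graph_pts f k \<Longrightarrow> L \<le> \<theta> \<and> \<theta> \<le> R"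
proof -
  assume h: "\<theta> \<in> graph_pts f k"
  have bb: "bdd_below (graph_pts f k)" using graph_bnd by (intro bdd_belowI[of _ "-(2*real k+2)"]) (fastforce)
  have ba: "bdd_above (graph_pts f k)" using graph_bnd by (intro bdd_aboveI[of _ "2*real k+2"]) (fastforce)
  show ?thesis unfolding eta_l_def eta_r_def using cInf_lower[OF h bb] cSup_upper[OF h ba] by auto
qed

lemma phi_simp: "\<phi> t = (if t \<in> {L+\<epsilon>..R-\<epsilon>} then f t + ereal e else \<infinity>)"
  by (simp add: fsharp_def)

lemma phi_fin: "\<phi> t < \<infinity> \<longleftrightarrow> t \<in> {L+\<epsilon>..R-\<epsilon>}"
proof -
  have "t \<in> {L+\<epsilon>..R-\<epsilon>} \<Longrightarrow> f t + ereal e < \<infinity>" using f_fin[of t] ord by auto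
  then show ?thesis by (auto simp: phi_simp)
qed

lemma dom_phi: "dom_f \<phi> = {L+\<epsilon>..R-\<epsilon>}"
  unfolding dom_f_def using phi_fin by blast

lemma theta_l_phi: "theta_l \<phi> = ereal (L + \<epsilon>)"
  unfolding theta_l_def dom_phi
proof (rule antisym)
  show "Inf (ereal ` {L + \<epsilon>..R - \<epsilon>}) \<le> ereal (L + \<epsilon>)" using ord by (intro Inf_lower) auto
  show "ereal (L + \<epsilon>) \<le> Inf (ereal ` {L + \<epsilon>..R - \<epsilon>})" by (intro Inf_greatest) auto
qed

lemma theta_r_phi: "theta_r \<phi> = ereal (R - \<epsilon>)"
  unfolding theta_r_def dom_phi
proof (rule antisym)
  show "ereal (R - \<epsilon>) \<le> Sup (ereal ` {L + \<epsilon>..R - \<epsilon>})" using ord by (intro Sup_upper) auto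
  show "Sup (ereal ` {L + \<epsilon>..R - \<epsilon>}) \<le> ereal (R - \<epsilon>)" by (intro Sup_least) auto
qed

lemma f_eq2: "t \<in> {L+\<epsilon>..R-\<epsilon>} \<Longrightarrow> f t = ereal (real_of_ereal (f t))"
  by (rule f_eq) (use ord in auto)

lemma phi_eq: "t \<in> {L+\<epsilon>..R-\<epsilon>} \<Longrightarrow> \<phi> t = ereal (real_of_ereal (f t) + e)"
proof -
  assume t: "t \<in> {L+\<epsilon>..R-\<epsilon>}"
  obtain r where r: "f t = ereal r" using f_fin[of t] f_nn[of t] t ord by (cases "f t") auto
  show ?thesis using t r by (simp add: phi_simp)
qed

lemma f_le_phi: "f t \<le> \<phi> t"
proof (cases "t \<in> {L+\<epsilon>..R-\<epsilon>}")
  case True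
  obtain r where r: "f t = ereal r" using f_fin[of t] f_nn[of t] True ord by (cases "f t") auto
  then show ?thesis using phi_eq[OF True] e_pos by simp
qed (auto simp: phi_simp)

lemma f_less_phi: "t \<in> {L+\<epsilon>..R-\<epsilon>} \<Longrightarrow> f t < \<phi> t"
proof -
  assume True: "t \<in> {L+\<epsilon>..R-\<epsilon>}"
  obtain r where r: "f t = ereal r" using f_fin[of t] f_nn[of t] True ord by (cases "f t") auto
  then show ?thesis using phi_eq[OF True] e_pos by simp
qed

lemma epi_phi_sub: "epi \<phi> \<subseteq> epi f"
proof
  fix y assume "y \<in> epi \<phi>"
  then obtain t b where y: "y = (t,b)" "\<phi> t \<le> ereal b" by (cases y) (auto simp: epi_def)
  then have "f t \<le> ereal b" using f_le_phi[of t] by (meson order.trans)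
  then show "y \<in> epi f" using y by (simp add: epi_def)
qed

lemma epi_phi_ne: "epi \<phi> \<noteq> {}"
proof -
  have "L + \<epsilon> \<in> {L+\<epsilon>..R-\<epsilon>}" using ord by auto
  then have "(L+\<epsilon>, real_of_ereal (f (L+\<epsilon>)) + e) \<in> epi \<phi>"
    using phi_eq by (simp add: epi_def)
  then show ?thesis by auto
qed

lemma f_below_phi: "below f \<phi>"
proof -
  have "theta_l f \<le> ereal L" unfolding theta_l_def
    using f_fin[of L] ord by (intro Inf_lower) (auto simp: dom_f_def)
  moreover have "ereal L < ereal (L+\<epsilon>)" using ord by simp
  ultimately have 1: "theta_l f < theta_l \<phi>" unfolding theta_l_phi by (rule order.strict_trans1)
  have "ereal R \<le> theta_r f" unfolding theta_r_def
    using f_fin[of R] ord by (intro Sup_upper) (auto simp: dom_f_def)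
  moreover have "ereal (R-\<epsilon>) < ereal R" using ord by simp
  ultimately have 2: "theta_r \<phi> < theta_r f" unfolding theta_r_phi by (rule order.strict_trans2[rotated])
  have 3: "\<forall>t. theta_l \<phi> \<le> ereal t \<and> ereal t \<le> theta_r \<phi> \<longrightarrow> f t < \<phi> t"
    unfolding theta_l_phi theta_r_phi using f_less_phi by auto
  show ?thesis unfolding below_def using 1 2 3 by blast
qed

end



context FK begin

abbreviation "F t \<equiv> real_of_ereal (f t)"

lemma fin_obtain: "t \<in> {L..R} \<Longrightarrow> f t = ereal (F t)"
  by (rule f_eq)

lemma key_cover:
  assumes y: "(\<theta>, b) \<in> epi f" and yb: "bdist (0,0) (\<theta>, b) \<le> 2 * real k + 1"
    and sl: "sl \<in> {L..L+\<epsilon>}" and tlmin: "\<forall>t\<in>{L..L+\<epsilon>}. f sl \<le> f t"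
    and sr: "sr \<in> {R-\<epsilon>..R}" and trmin: "\<forall>t\<in>{R-\<epsilon>..R}. f sr \<le> f t"
  shows "\<exists>z\<in>epi \<phi>. bdist (\<theta>, b) z \<le> e + max 0 (max (F (L+\<epsilon>) - F sl) (F (R-\<epsilon>) - F sr))"
proof -
  define c where "c = e + max 0 (max (F (L+\<epsilon>) - F sl) (F (R-\<epsilon>) - F sr))"
  have ec: "e \<le> c" unfolding c_def by simp
  have fb: "f \<theta> \<le> ereal b" using y by (simp add: epi_def)
  have tb: "\<bar>\<theta>\<bar> \<le> 2 * real k + 1" "\<bar>b\<bar> \<le> 2 * real k + 1" using yb by (auto simp: bdist_pair)
  have ffin: "f \<theta> < \<infinity>" using fb by (rule order.strict_trans1) simp
  obtain r where r: "f \<theta> = ereal r" using ffin f_nn[of \<theta>] by (cases "f \<theta>") auto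
  have r0: "0 \<le> r" using f_nn[of \<theta>] r by simp
  have rb: "r \<le> b" using fb r by simp
  have "\<theta> \<in> graph_pts f k" unfolding graph_pts_def bball_def using ffin r r0 rb tb
    by (simp add: bdist_pair)
  then have thLR: "L \<le> \<theta>" "\<theta> \<le> R" using graph_LR by auto
  consider "\<theta> \<in> {L+\<epsilon>..R-\<epsilon>}" | "\<theta> < L + \<epsilon>" | "R - \<epsilon> < \<theta>" by fastforce
  then show ?thesis
  proof cases
    case 1
    have "(\<theta>, b + e) \<in> epi \<phi>" using phi_eq[OF 1] r rb by (simp add: epi_def)
    moreover have "bdist (\<theta>, b) (\<theta>, b + e) \<le> c" using ec e_pos by (simp add: bdist_pair)
    ultimately show ?thesis unfolding c_def by blast
  next
    case 2
    have a: "L + \<epsilon> \<in> {L+\<epsilon>..R-\<epsilon>}" using ord by auto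
    have t1: "\<theta> \<in> {L..L+\<epsilon>}" using 2 thLR by auto
    have "f sl \<le> f \<theta>" using tlmin t1 by blast
    moreover have "f sl = ereal (F sl)" using sl ord by (intro fin_obtain) auto
    ultimately have "ereal (F sl) \<le> ereal r" using r by metis
    then have "F sl \<le> r" by simp
    have "(L+\<epsilon>, max b (F (L+\<epsilon>)) + e) \<in> epi \<phi>" using phi_eq[OF a] by (simp add: epi_def)
    moreover have "bdist (\<theta>, b) (L+\<epsilon>, max b (F (L+\<epsilon>)) + e) \<le> c"
      unfolding bdist_pair c_def using \<open>F sl \<le> r\<close> rb 2 thLR eps_small e_pos by (auto simp: max_def)
    ultimately show ?thesis unfolding c_def by blast
  next
    case 3
    have a: "R - \<epsilon> \<in> {L+\<epsilon>..R-\<epsilon>}" using ord by auto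
    have t1: "\<theta> \<in> {R-\<epsilon>..R}" using 3 thLR by auto
    have "f sr \<le> f \<theta>" using trmin t1 by blast
    moreover have "f sr = ereal (F sr)" using sr ord by (intro fin_obtain) auto
    ultimately have "ereal (F sr) \<le> ereal r" using r by metis
    then have "F sr \<le> r" by simp
    have "(R-\<epsilon>, max b (F (R-\<epsilon>)) + e) \<in> epi \<phi>" using phi_eq[OF a] by (simp add: epi_def)
    moreover have "bdist (\<theta>, b) (R-\<epsilon>, max b (F (R-\<epsilon>)) + e) \<le> c"
      unfolding bdist_pair c_def using \<open>F sr \<le> r\<close> rb 3 thLR eps_small e_pos by (auto simp: max_def)
    ultimately show ?thesis unfolding c_def by blast
  qed
qed

lemma dist_est: "\<exists>c. c < 1 / real k \<and>
   (\<forall>x\<in>bcball (real k). \<bar>bsetdist x (epi f) - bsetdist x (epi \<phi>)\<bar> \<le> c)"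
proof -
  obtain sl where sl: "sl \<in> {L..L+\<epsilon>}" "\<forall>t\<in>{L..L+\<epsilon>}. f sl \<le> f t"
    using lsc_attains_min[OF f_lsc f_nn, of L "L+\<epsilon>"] ord by auto
  obtain sr where sr: "sr \<in> {R-\<epsilon>..R}" "\<forall>t\<in>{R-\<epsilon>..R}. f sr \<le> f t"
    using lsc_attains_min[OF f_lsc f_nn, of "R-\<epsilon>" R] ord by auto
  define c where "c = e + max 0 (max (F (L+\<epsilon>) - F sl) (F (R-\<epsilon>) - F sr))"
  have "\<bar>F (L+\<epsilon>) - F sl\<bar> < e" using pair_l[of "L+\<epsilon>" sl] sl ord by auto
  moreover have "\<bar>F (R-\<epsilon>) - F sr\<bar> < e" using pair_r[of "R-\<epsilon>" sr] sr ord by auto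
  moreover have "e + e = 1 / real k" by simp
  ultimately have c_lt: "c < 1 / real k" unfolding c_def using e_pos
    by (simp only: max_less_iff_conj abs_less_iff) linarith
  have c0: "0 \<le> c" unfolding c_def using e_pos by simp
  have cover: "\<exists>z\<in>epi \<phi>. bdist y z \<le> c" if "y \<in> epi f" "bdist (0,0) y \<le> 2 * real k + 1" for y
    using key_cover[of "fst y" "snd y" sl sr] that sl sr unfolding c_def by auto
  have y0: "(0,1) \<in> epi f" using f0 by (simp add: epi_def)
  have "\<bar>bsetdist x (epi f) - bsetdist x (epi \<phi>)\<bar> \<le> c" if x: "x \<in> bcball (real k)" for x
  proof -
    have bx: "bdist (0,0) x \<le> real k" using x by (simp add: bcball_def)
    have step: "bsetdist x (epi \<phi>) \<le> bdist x y + c" if y: "y \<in> epi f" "bdist x y \<le> real k + 1" for y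
    proof -
      have "bdist (0,0) y \<le> 2 * real k + 1" using bdist_tri[of "(0,0)" y x] bx y(2) by linarith
      then obtain z where z: "z \<in> epi \<phi>" "bdist y z \<le> c" using cover y(1) by blast
      have "bsetdist x (epi \<phi>) \<le> bdist x z" by (rule bsetdist_le[OF z(1)])
      also have "\<dots> \<le> bdist x y + bdist y z" by (rule bdist_tri)
      finally show ?thesis using z(2) by linarith
    qed
    have bx0: "bdist x (0,1) \<le> real k + 1" using x by (auto simp: bcball_mem bdist_def)
    have low: "bsetdist x (epi \<phi>) - c \<le> bsetdist x (epi f)"
    proof (rule bsetdist_ge[OF XM_epi_ne[OF fX]])
      fix y assume y: "y \<in> epi f"
      show "bsetdist x (epi \<phi>) - c \<le> bdist x y"
      proof (cases "bdist x y \<le> real k + 1")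
        case True then show ?thesis using step[OF y] by linarith
      next
        case False then show ?thesis using step[OF y0 bx0] bx0 by linarith
      qed
    qed
    have up: "bsetdist x (epi f) \<le> bsetdist x (epi \<phi>)"
    proof (rule bsetdist_ge[OF epi_phi_ne])
      fix y assume "y \<in> epi \<phi>"
      then have "y \<in> epi f" using epi_phi_sub by blast
      then show "bsetdist x (epi f) \<le> bdist x y" by (rule bsetdist_le)
    qed
    show ?thesis using low up by linarith
  qed
  then show ?thesis using c_lt by blast
qed

lemma f_in_Vk: "f \<in> Vk k \<phi>"
proof -
  obtain c where c: "c < 1 / real k" "\<forall>x\<in>bcball (real k). \<bar>bsetdist x (epi f) - bsetdist x (epi \<phi>)\<bar> \<le> c"
    using dist_est by blast
  have "(SUP x\<in>bcball (real k). \<bar>bsetdist x (epi f) - bsetdist x (epi \<phi>)\<bar>) \<le> c"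
    by (rule sup_le) (use c in auto)
  then show ?thesis using c fX unfolding Vk_def by auto
qed

end


lemma cont_conv:
  assumes cv: "convex_fun g" and nn: "\<And>t. g t \<ge> 0" and ga: "g a < \<infinity>" and gb: "g b < \<infinity>"
  shows "continuous_on {a<..<b} (\<lambda>t. real_of_ereal (g t))"
proof (rule convex_on_continuous)
  show "open {a<..<b}" by simp
  have fin: "\<exists>u. g x = ereal u" if "x \<in> {a<..<b}" for x
  proof -
    have "g x < \<infinity>" using conv_fin[OF cv nn, of a x b] ga gb that by auto
    then show ?thesis using nn[of x] by (cases "g x") auto
  qed
  show "convex_on {a<..<b} (\<lambda>t. real_of_ereal (g t))"
  proof (rule convex_onI)
    fix t x y :: real assume t: "0 < t" "t < 1" and x: "x \<in> {a<..<b}" and y: "y \<in> {a<..<b}"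
    have "0 \<le> (1-t)*(x-a)" "0 < t*(y-a)" "0 \<le> (1-t)*(b-x)" "0 < t*(b-y)" using t x y by auto
    then have z: "(1 - t) * x + t * y \<in> {a<..<b}" by (auto simp: algebra_simps)
    obtain u v w where u: "g x = ereal u" and v: "g y = ereal v" and w: "g ((1 - t) * x + t * y) = ereal w"
      using fin[OF x] fin[OF y] fin[OF z] by blast
    have "g ((1 - t) * x + (1 - (1 - t)) * y) \<le> ereal (1 - t) * g x + ereal (1 - (1 - t)) * g y"
      by (rule cv[unfolded convex_fun_def, rule_format]) (use t in auto)
    then have "w \<le> (1 - t) * u + t * v" using u v w by simp
    then show "real_of_ereal (g ((1 - t) *\<^sub>R x + t *\<^sub>R y)) \<le> (1 - t) * real_of_ereal (g x) + t * real_of_ereal (g y)"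
      using u v w by simp
  qed simp
qed

lemma near_pt:
  assumes gX: "g \<in> XM" and hV: "h \<in> Vk m g" and m1: "m \<ge> 1"
    and gt: "g t = ereal u" and tm: "\<bar>t\<bar> \<le> real m" and um: "\<bar>u\<bar> \<le> real m"
  shows "\<exists>s. \<bar>s - t\<bar> < 1 / real m \<and> h s \<le> ereal (u + 1 / real m)"
proof -
  have hX: "h \<in> XM" using hV by (simp add: Vk_def)
  have p: "(t, u) \<in> epi g" using gt by (simp add: epi_def)
  have pb: "(t, u) \<in> bcball (real m)" using tm um by (simp add: bcball_mem)
  have "\<bar>bsetdist (t,u) (epi h) - bsetdist (t,u) (epi g)\<bar> \<le>
     (SUP x\<in>bcball (real m). \<bar>bsetdist x (epi h) - bsetdist x (epi g)\<bar>)"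
    by (rule sup_ge[OF XM_epi_ne[OF hX] XM_epi_ne[OF gX] pb])
  also have "\<dots> < 1 / real m" using hV by (simp add: Vk_def)
  finally have "bsetdist (t,u) (epi h) < 1 / real m" using bsetdist_mem[OF p] by simp
  then obtain y where y: "y \<in> epi h" "bdist (t,u) y < 1 / real m"
    using bsetdist_lessD[OF XM_epi_ne[OF hX]] by blast
  obtain s b where sb: "y = (s, b)" by (cases y)
  have "h s \<le> ereal b" using y(1) sb by (simp add: epi_def)
  moreover have "\<bar>t - s\<bar> < 1 / real m" "\<bar>u - b\<bar> < 1 / real m" using y(2) sb by (auto simp: bdist_pair)
  moreover have "ereal b \<le> ereal (u + 1 / real m)" using calculation(3) by simp
  ultimately show ?thesis by (metis abs_minus_commute order.trans)
qed

lemma W_open_gen: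
  assumes ab: "\<alpha> < \<beta>" and thl: "theta_l \<phi> = ereal \<alpha>" and thr: "theta_r \<phi> = ereal \<beta>"
    and Pe: "\<And>t. t \<in> {\<alpha>..\<beta>} \<Longrightarrow> \<phi> t = ereal (P t)" and Pc: "continuous_on {\<alpha>..\<beta>} P"
    and gX: "g \<in> XM" and gb: "below g \<phi>"
  shows "\<exists>m0\<ge>1. \<forall>m\<ge>m0. \<forall>h\<in>Vk m g. below h \<phi>"
proof -
  have cv: "convex_fun g" and nn: "\<And>t. g t \<ge> 0" using gX by (auto simp: XM_def)
  have "theta_l g < ereal \<alpha>" using gb thl by (simp add: below_def)
  then obtain t1 where t1: "t1 \<in> dom_f g" "t1 < \<alpha>" unfolding theta_l_def Inf_less_iff by auto
  have "ereal \<beta> < theta_r g" using gb thr by (simp add: below_def)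
  then obtain t2 where t2: "t2 \<in> dom_f g" "\<beta> < t2" unfolding theta_r_def less_Sup_iff by auto
  have g1: "g t1 < \<infinity>" and g2: "g t2 < \<infinity>" using t1 t2 by (auto simp: dom_f_def)
  define G where "G = (\<lambda>t. real_of_ereal (g t))"
  have Gfin: "g t = ereal (G t)" if "t \<in> {t1..t2}" for t
  proof -
    have "g t < \<infinity>" using conv_fin[OF cv nn, of t1 t t2] g1 g2 that by auto
    then show ?thesis unfolding G_def using nn[of t] by (cases "g t") auto
  qed
  have G0: "0 \<le> G t" for t unfolding G_def using nn[of t] by (simp add: real_of_ereal_pos)
  have Gc: "continuous_on {t1<..<t2} G" unfolding G_def by (rule cont_conv[OF cv nn g1 g2])
  define r0 where "r0 = min (\<alpha> - t1) (t2 - \<beta>) / 2"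
  have r0: "0 < r0" "r0 < \<alpha> - t1" "r0 < t2 - \<beta>" using t1 t2 by (auto simp: r0_def)
  define J where "J = {\<alpha> - r0 .. \<beta> + r0}"
  have JI: "J \<subseteq> {t1<..<t2}" using r0 unfolding J_def by auto
  have J2: "J \<subseteq> {t1..t2}" using JI by auto
  have GJ: "continuous_on J G" using Gc JI continuous_on_subset by blast
  have Jc: "compact J" "J \<noteq> {}" using ab r0 unfolding J_def by auto
  obtain tM where tM: "tM \<in> J" "\<forall>t\<in>J. G t \<le> G tM" using continuous_attains_sup[OF Jc GJ] by blast
  define M where "M = G tM"
  define B where "B = \<bar>\<alpha>\<bar> + \<bar>\<beta>\<bar> + r0"
  have JB: "\<bar>t\<bar> \<le> B" if "t \<in> J" for t using that r0 unfolding J_def B_def by auto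
  have JM: "\<bar>G t\<bar> \<le> M" if "t \<in> J" for t using that tM G0[of t] unfolding M_def by auto
  have abJ: "{\<alpha>..\<beta>} \<subseteq> J" using r0 unfolding J_def by auto
  have PGc: "continuous_on {\<alpha>..\<beta>} (\<lambda>t. P t - G t)"
    by (intro continuous_intros Pc continuous_on_subset[OF GJ abJ])
  obtain t0 where t0: "t0 \<in> {\<alpha>..\<beta>}" "\<forall>t\<in>{\<alpha>..\<beta>}. P t0 - G t0 \<le> P t - G t"
    using continuous_attains_inf[OF compact_Icc _ PGc] ab by auto
  have GP: "G t < P t" if "t \<in> {\<alpha>..\<beta>}" for t
  proof -
    have "g t < \<phi> t" using gb that thl thr unfolding below_def by auto
    moreover have "g t = ereal (G t)" using Gfin that abJ J2 by blast
    ultimately show ?thesis using Pe[OF that] by simp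
  qed
  define \<delta> where "\<delta> = P t0 - G t0"
  have \<delta>: "0 < \<delta>" using GP[OF t0(1)] unfolding \<delta>_def by simp
  have \<delta>le: "G t \<le> P t - \<delta>" if "t \<in> {\<alpha>..\<beta>}" for t
  proof -
    have "P t0 - G t0 \<le> P t - G t" using t0(2) that by blast
    then show ?thesis unfolding \<delta>_def by linarith
  qed
  have "uniformly_continuous_on J G" by (rule compact_uniformly_continuous[OF GJ Jc(1)])
  moreover have "\<delta>/3 > 0" using \<delta> by simp
  ultimately obtain d where d: "d > 0" "\<forall>x\<in>J. \<forall>x'\<in>J. dist x' x < d \<longrightarrow> dist (G x') (G x) < \<delta>/3"
    unfolding uniformly_continuous_on_def by blast
  define r where "r = min r0 d / 2"
  have r: "0 < r" "r < r0" "r < d" using r0 d unfolding r_def by auto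
  define m0 where "m0 = nat \<lceil>max (max B M) (max (1/r) (3/\<delta>))\<rceil> + 1"
  define X where "X = max (max B M) (max (1/r) (3/\<delta>))"
  have X: "B \<le> X" "M \<le> X" "1/r \<le> X" "3/\<delta> \<le> X" unfolding X_def by auto
  have "X \<le> real (nat \<lceil>X\<rceil>)" by (rule real_nat_ceiling_ge)
  then have Xm: "X < real m0" unfolding m0_def X_def[symmetric] by simp
  have m0: "B < real m0" "M < real m0" "1/r < real m0" "3/\<delta> < real m0" using X Xm by linarith+
  have m01: "m0 \<ge> 1" unfolding m0_def by simp
  show ?thesis
  proof (intro exI[of _ m0] conjI allI impI ballI m01)
    fix m h assume mm: "m0 \<le> m" and hV: "h \<in> Vk m g"
    have hX: "h \<in> XM" using hV by (simp add: Vk_def)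
    have hcv: "convex_fun h" using hX by (simp add: XM_def)
    have "real m0 \<le> real m" using mm by simp
    then have mr: "B < real m" "M < real m" "1/r < real m" "3/\<delta> < real m" using m0 by linarith+
    have "0 < 1/r" using r by simp
    then have mpos: "0 < real m" using mr(3) by linarith
    have m1: "m \<ge> 1" using mpos by simp
    have im_r: "1 / real m < r" using mr(3) r mpos by (simp add: field_simps)
    have im_d: "1 / real m < \<delta> / 3" using mr(4) \<delta> mpos by (simp add: field_simps)
    have near: "\<exists>s. \<bar>s - t\<bar> < 1 / real m \<and> h s \<le> ereal (G t + 1 / real m)" if "t \<in> J" for t
    proof (rule near_pt[OF gX hV m1 Gfin])
      show "t \<in> {t1..t2}" using that J2 by blast
      show "\<bar>t\<bar> \<le> real m" using JB[OF that] mr(1) by linarith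
      show "\<bar>G t\<bar> \<le> real m" using JM[OF that] mr(2) by linarith
    qed
    have aJ: "\<alpha> - r \<in> J" "\<beta> + r \<in> J" using r ab unfolding J_def by auto
    obtain s1 where s1: "\<bar>s1 - (\<alpha> - r)\<bar> < 1 / real m" "h s1 \<le> ereal (G (\<alpha> - r) + 1 / real m)"
      using near[OF aJ(1)] by blast
    have "h s1 < \<infinity>" using s1(2) by (rule order.strict_trans1) simp
    then have "s1 \<in> dom_f h" by (simp add: dom_f_def)
    then have "theta_l h \<le> ereal s1" unfolding theta_l_def by (intro Inf_lower) auto
    moreover have "s1 < \<alpha>" using s1(1) im_r by linarith
    then have "ereal s1 < ereal \<alpha>" by simp
    ultimately have L: "theta_l h < theta_l \<phi>" unfolding thl by (rule order.strict_trans1)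
    obtain s2 where s2: "\<bar>s2 - (\<beta> + r)\<bar> < 1 / real m" "h s2 \<le> ereal (G (\<beta> + r) + 1 / real m)"
      using near[OF aJ(2)] by blast
    have "h s2 < \<infinity>" using s2(2) by (rule order.strict_trans1) simp
    then have "s2 \<in> dom_f h" by (simp add: dom_f_def)
    then have "ereal s2 \<le> theta_r h" unfolding theta_r_def by (intro Sup_upper) auto
    moreover have "\<beta> < s2" using s2(1) im_r by linarith
    then have "ereal \<beta> < ereal s2" by simp
    ultimately have Rr: "theta_r \<phi> < theta_r h" unfolding thr by (rule order.strict_trans2[rotated])
    have mid: "h \<theta> < \<phi> \<theta>" if th: "\<theta> \<in> {\<alpha>..\<beta>}" for \<theta>
    proof -
      have tJ: "\<theta> - r \<in> J" "\<theta> + r \<in> J" "\<theta> \<in> J" using th r unfolding J_def by auto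
      obtain u1 where u1: "\<bar>u1 - (\<theta> - r)\<bar> < 1 / real m" "h u1 \<le> ereal (G (\<theta> - r) + 1 / real m)"
        using near[OF tJ(1)] by blast
      obtain u2 where u2: "\<bar>u2 - (\<theta> + r)\<bar> < 1 / real m" "h u2 \<le> ereal (G (\<theta> + r) + 1 / real m)"
        using near[OF tJ(2)] by blast
      have "dist (G (\<theta> - r)) (G \<theta>) < \<delta>/3" using d(2) tJ r by (auto simp: dist_real_def)
      then have c1: "G (\<theta> - r) < G \<theta> + \<delta>/3" unfolding dist_real_def by linarith
      have "dist (G (\<theta> + r)) (G \<theta>) < \<delta>/3" using d(2) tJ r by (auto simp: dist_real_def)
      then have c2: "G (\<theta> + r) < G \<theta> + \<delta>/3" unfolding dist_real_def by linarith
      define K where "K = P \<theta> - \<delta> + \<delta>/3 + 1 / real m"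
      have K: "K < P \<theta>" unfolding K_def using im_d \<delta> by linarith
      have "G (\<theta> - r) + 1 / real m \<le> K" using c1 \<delta>le[OF th] unfolding K_def by linarith
      then have "ereal (G (\<theta> - r) + 1 / real m) \<le> ereal K" by simp
      with u1(2) have "h u1 \<le> ereal K" by (rule order.trans)
      have "G (\<theta> + r) + 1 / real m \<le> K" using c2 \<delta>le[OF th] unfolding K_def by linarith
      then have "ereal (G (\<theta> + r) + 1 / real m) \<le> ereal K" by simp
      with u2(2) have hu2: "h u2 \<le> ereal K" by (rule order.trans)
      note \<open>h u1 \<le> ereal K\<close>
      moreover have "u1 < \<theta>" "\<theta> < u2" using u1(1) u2(1) im_r by linarith+
      ultimately have "h \<theta> \<le> ereal K" using hu2 by (intro conv_le[OF hcv, of u1 \<theta> u2]) auto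
      also have "\<dots> < \<phi> \<theta>" using K Pe[OF th] by simp
      finally show ?thesis .
    qed
    have "\<forall>\<theta>. theta_l \<phi> \<le> ereal \<theta> \<and> ereal \<theta> \<le> theta_r \<phi> \<longrightarrow> h \<theta> < \<phi> \<theta>"
      unfolding thl thr using mid by simp
    then show "below h \<phi>" unfolding below_def using L Rr by blast
  qed
qed



lemma comb_nn: "0 \<le> a \<Longrightarrow> a \<le> 1 \<Longrightarrow> 0 \<le> (x::ereal) \<Longrightarrow> 0 \<le> y \<Longrightarrow> 0 \<le> ereal a * x + ereal (1 - a) * y"
  by simp

lemma comb_inf: "0 < a \<Longrightarrow> a < 1 \<Longrightarrow> 0 \<le> (x::ereal) \<Longrightarrow> 0 \<le> y \<Longrightarrow>
   (ereal a * x + ereal (1 - a) * y = \<infinity>) \<longleftrightarrow> (x = \<infinity> \<or> y = \<infinity>)"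
  by (cases x; cases y) auto

lemma comb_ge_min: "0 \<le> a \<Longrightarrow> a \<le> 1 \<Longrightarrow> 0 \<le> (x::ereal) \<Longrightarrow> 0 \<le> y \<Longrightarrow>
   min x y \<le> ereal a * x + ereal (1 - a) * y"
proof (cases x; cases y)
  fix u v assume a: "0 \<le> a" "a \<le> 1" and x: "x = ereal u" and y: "y = ereal v"
  have "min u v \<le> a * u + (1 - a) * v"
  proof (cases "u \<le> v")
    case True
    then have "(1 - a) * u \<le> (1 - a) * v" using a by (intro mult_left_mono) auto
    then show ?thesis using True by (simp add: algebra_simps)
  next
    case False
    then have "a * v \<le> a * u" using a by (intro mult_left_mono) auto
    then show ?thesis using False by (simp add: algebra_simps)
  qed
  then show ?thesis using x y by (simp add: min_def split: if_splits)
qed auto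

lemma comb_XM:
  assumes gX: "g \<in> XM" and hX: "h \<in> XM" and a: "0 < a" "a < 1"
  shows "(\<lambda>\<theta>. ereal a * g \<theta> + ereal (1 - a) * h \<theta>) \<in> XM"
proof -
  define c where "c = (\<lambda>\<theta>. ereal a * g \<theta> + ereal (1 - a) * h \<theta>)"
  have gn: "\<And>t. 0 \<le> g t" and hn: "\<And>t. 0 \<le> h t" using gX hX by (auto simp: XM_def)
  have gc: "convex_fun g" and hc: "convex_fun h" using gX hX by (auto simp: XM_def)
  have gl: "lsc g" and hl: "lsc h" using gX hX by (auto simp: XM_def)
  have cn: "0 \<le> c t" for t unfolding c_def using comb_nn[of a "g t" "h t"] a gn hn by auto
  have c0: "c 0 < \<infinity>"
  proof -
    have "g 0 < \<infinity>" "h 0 < \<infinity>" using gX hX by (auto simp: XM_def)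
    then have "c 0 \<noteq> \<infinity>" unfolding c_def using comb_inf[OF a gn hn] by auto
    then show ?thesis by (simp add: less_le)
  qed
  have ccv: "convex_fun c" unfolding convex_fun_def
  proof (intro allI impI)
    fix x y l :: real assume l: "0 < l \<and> l < 1"
    define z where "z = l * x + (1 - l) * y"
    show "c (l * x + (1 - l) * y) \<le> ereal l * c x + ereal (1 - l) * c y"
    proof (cases "c x = \<infinity> \<or> c y = \<infinity>")
      case True
      then have eq: "ereal l * c x + ereal (1 - l) * c y = \<infinity>" using comb_inf[of l "c x" "c y"] l cn by auto
      show ?thesis by (subst eq) simp
    next
      case False
      then have fin: "g x \<noteq> \<infinity>" "h x \<noteq> \<infinity>" "g y \<noteq> \<infinity>" "h y \<noteq> \<infinity>"
        unfolding c_def using comb_inf[OF a gn hn] by auto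
      obtain gx where gx: "g x = ereal gx" using fin(1) gn[of x] by (cases "g x") auto
      obtain hx where hx: "h x = ereal hx" using fin(2) hn[of x] by (cases "h x") auto
      obtain gy where gy: "g y = ereal gy" using fin(3) gn[of y] by (cases "g y") auto
      obtain hy where hy: "h y = ereal hy" using fin(4) hn[of y] by (cases "h y") auto
      have gz: "g z \<le> ereal (l * gx + (1 - l) * gy)"
        using gc[unfolded convex_fun_def, rule_format, of l x y] l gx gy unfolding z_def by simp
      have hz: "h z \<le> ereal (l * hx + (1 - l) * hy)"
        using hc[unfolded convex_fun_def, rule_format, of l x y] l hx hy unfolding z_def by simp
      obtain gzz where gzz: "g z = ereal gzz" using gz gn[of z] by (cases "g z") auto
      obtain hzz where hzz: "h z = ereal hzz" using hz hn[of z] by (cases "h z") auto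
      have 1: "a * gzz \<le> a * (l * gx + (1 - l) * gy)" using gz gzz a by (intro mult_left_mono) auto
      have 2: "(1 - a) * hzz \<le> (1 - a) * (l * hx + (1 - l) * hy)" using hz hzz a by (intro mult_left_mono) auto
      have eq: "l * (a * gx + (1 - a) * hx) + (1 - l) * (a * gy + (1 - a) * hy) =
         a * (l * gx + (1 - l) * gy) + (1 - a) * (l * hx + (1 - l) * hy)" by (simp add: algebra_simps)
      have "a * gzz + (1 - a) * hzz \<le> l * (a * gx + (1 - a) * hx) + (1 - l) * (a * gy + (1 - a) * hy)"
        using 1 2 eq by linarith
      then show ?thesis unfolding c_def z_def[symmetric] using gx hx gy hy gzz hzz by simp
    qed
  qed
  have clsc: "lsc c" unfolding lsc_def
  proof
    fix x
    have nb: "at x \<noteq> (bot :: real filter)" by simp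
    have "c x \<le> ereal a * Liminf (at x) g + ereal (1 - a) * Liminf (at x) h"
      unfolding c_def using gl hl a unfolding lsc_def
      by (intro add_mono ereal_mult_left_mono) auto
    also have "\<dots> = Liminf (at x) (\<lambda>t. ereal a * g t) + Liminf (at x) (\<lambda>t. ereal (1 - a) * h t)"
      using Liminf_ereal_mult_left[OF nb, of a g] Liminf_ereal_mult_left[OF nb, of "1 - a" h] a by simp
    also have "\<dots> \<le> Liminf (at x) c" unfolding c_def
      by (rule Liminf_add_le[OF nb]) (use a gn hn in auto)
    finally show "c x \<le> Liminf (at x) c" .
  qed
  show ?thesis using cn c0 ccv clsc unfolding XM_def c_def by auto
qed

lemma comb_Ak:
  assumes thl: "theta_l \<phi> = ereal \<alpha>" and thr: "theta_r \<phi> = ereal \<beta>" and ab: "\<alpha> \<le> \<beta>"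
    and dphi: "\<And>\<theta>. \<phi> \<theta> < \<infinity> \<Longrightarrow> \<theta> \<in> {\<alpha>..\<beta>}" and ne: "epi \<phi> \<noteq> {}"
    and g: "g \<in> Vk k \<phi> \<inter> W \<phi>" and h: "h \<in> Vk k \<phi> \<inter> W \<phi>" and a: "a \<in> {0..1}"
  shows "(\<lambda>\<theta>. ereal a * g \<theta> + ereal (1 - a) * h \<theta>) \<in> Vk k \<phi> \<inter> W \<phi>"
proof -
  consider "a = 0" | "a = 1" | "0 < a \<and> a < 1" using a by fastforce
  then show ?thesis
  proof cases
    case 1
    then have "(\<lambda>\<theta>. ereal a * g \<theta> + ereal (1 - a) * h \<theta>) = h" by (simp add: one_ereal_def[symmetric] zero_ereal_def[symmetric])
    then show ?thesis using h by simp
  next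
    case 2
    then have "(\<lambda>\<theta>. ereal a * g \<theta> + ereal (1 - a) * h \<theta>) = g" by (simp add: one_ereal_def[symmetric] zero_ereal_def[symmetric])
    then show ?thesis using g by simp
  next
    case 3
    then have a0: "0 < a" and a1: "a < 1" by auto
    define c where "c = (\<lambda>\<theta>. ereal a * g \<theta> + ereal (1 - a) * h \<theta>)"
    have gX: "g \<in> XM" and hX: "h \<in> XM" using g h by (auto simp: Vk_def)
    have cX: "c \<in> XM" unfolding c_def by (rule comb_XM[OF gX hX a0 a1])
    have gn: "\<And>t. 0 \<le> g t" and hn: "\<And>t. 0 \<le> h t" using gX hX by (auto simp: XM_def)
    have gc: "convex_fun g" and hc: "convex_fun h" using gX hX by (auto simp: XM_def)
    have gb: "below g \<phi>" and hb: "below h \<phi>" using g h by (auto simp: W_def)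
    have gmid: "g \<theta> < \<phi> \<theta>" if "\<alpha> \<le> \<theta>" "\<theta> \<le> \<beta>" for \<theta> using gb that thl thr by (auto simp: below_def)
    have hmid: "h \<theta> < \<phi> \<theta>" if "\<alpha> \<le> \<theta>" "\<theta> \<le> \<beta>" for \<theta> using hb that thl thr by (auto simp: below_def)
    have gfa: "g \<theta> < \<infinity>" if "\<alpha> \<le> \<theta>" "\<theta> \<le> \<beta>" for \<theta> using gmid[OF that] by (rule order.strict_trans2) simp
    have hfa: "h \<theta> < \<infinity>" if "\<alpha> \<le> \<theta>" "\<theta> \<le> \<beta>" for \<theta> using hmid[OF that] by (rule order.strict_trans2) simp
    have cinf: "c t < \<infinity> \<longleftrightarrow> g t < \<infinity> \<and> h t < \<infinity>" for t
      using comb_inf[OF a0 a1 gn[of t] hn[of t]] unfolding c_def by (auto simp: less_le)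
    have "theta_l g < ereal \<alpha>" using gb thl by (simp add: below_def)
    then obtain tg where tg: "tg \<in> dom_f g" "tg < \<alpha>" unfolding theta_l_def Inf_less_iff by auto
    have "theta_l h < ereal \<alpha>" using hb thl by (simp add: below_def)
    then obtain th where th: "th \<in> dom_f h" "th < \<alpha>" unfolding theta_l_def Inf_less_iff by auto
    define t where "t = max tg th"
    have "g t < \<infinity>" using conv_fin[OF gc gn, of tg t \<alpha>] tg th gfa[of \<alpha>] ab unfolding t_def dom_f_def by auto
    moreover have "h t < \<infinity>" using conv_fin[OF hc hn, of th t \<alpha>] th tg hfa[of \<alpha>] ab unfolding t_def dom_f_def by auto
    ultimately have "t \<in> dom_f c" using cinf by (simp add: dom_f_def)
    then have "theta_l c \<le> ereal t" unfolding theta_l_def by (intro Inf_lower) auto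
    moreover have "ereal t < ereal \<alpha>" using tg th unfolding t_def by simp
    ultimately have Lc: "theta_l c < theta_l \<phi>" unfolding thl by (rule order.strict_trans1)
    have "ereal \<beta> < theta_r g" using gb thr by (simp add: below_def)
    then obtain sg where sg: "sg \<in> dom_f g" "\<beta> < sg" unfolding theta_r_def less_Sup_iff by auto
    have "ereal \<beta> < theta_r h" using hb thr by (simp add: below_def)
    then obtain sh where sh: "sh \<in> dom_f h" "\<beta> < sh" unfolding theta_r_def less_Sup_iff by auto
    define s where "s = min sg sh"
    have "g s < \<infinity>" using conv_fin[OF gc gn, of \<beta> s sg] sg sh gfa[of \<beta>] ab unfolding s_def dom_f_def by auto
    moreover have "h s < \<infinity>" using conv_fin[OF hc hn, of \<beta> s sh] sh sg hfa[of \<beta>] ab unfolding s_def dom_f_def by auto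
    ultimately have "s \<in> dom_f c" using cinf by (simp add: dom_f_def)
    then have "ereal s \<le> theta_r c" unfolding theta_r_def by (intro Sup_upper) auto
    moreover have "ereal \<beta> < ereal s" using sg sh unfolding s_def by simp
    ultimately have Rc: "theta_r \<phi> < theta_r c" unfolding thr by (rule order.strict_trans2[rotated])
    have cmid: "c \<theta> < \<phi> \<theta>" if th1: "\<alpha> \<le> \<theta>" "\<theta> \<le> \<beta>" for \<theta>
    proof -
      obtain u where u: "g \<theta> = ereal u" using gfa[OF th1] gn[of \<theta>] by (cases "g \<theta>") auto
      obtain v where v: "h \<theta> = ereal v" using hfa[OF th1] hn[of \<theta>] by (cases "h \<theta>") auto
      show ?thesis
      proof (cases "\<phi> \<theta>")
        case (real p)
        have "u < p" "v < p" using gmid[OF th1] hmid[OF th1] u v real by auto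
        then have "a * u < a * p" "(1 - a) * v < (1 - a) * p" using a0 a1 by auto
        then have "a * u + (1 - a) * v < p" by (simp add: algebra_simps)
        then show ?thesis unfolding c_def using u v real by simp
      next
        case PInf then show ?thesis unfolding c_def using u v by simp
      next
        case MInf then show ?thesis using gmid[OF th1] gn[of \<theta>] by simp
      qed
    qed
    have cb: "below c \<phi>" unfolding below_def using Lc Rc cmid thl thr by simp
    have sub: "epi \<phi> \<subseteq> epi c"
    proof
      fix y assume "y \<in> epi \<phi>"
      then obtain \<theta> b where y: "y = (\<theta>, b)" "\<phi> \<theta> \<le> ereal b" by (cases y) (auto simp: epi_def)
      have "\<phi> \<theta> < \<infinity>" using y(2) by (rule order.strict_trans1) simp
      then have "\<theta> \<in> {\<alpha>..\<beta>}" by (rule dphi)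
      then have "c \<theta> < \<phi> \<theta>" using cmid by auto
      then have "c \<theta> \<le> ereal b" using y(2) by simp
      then show "y \<in> epi c" using y(1) by (simp add: epi_def)
    qed
    define Sg where "Sg = (SUP x\<in>bcball (real k). \<bar>bsetdist x (epi g) - bsetdist x (epi \<phi>)\<bar>)"
    define Sh where "Sh = (SUP x\<in>bcball (real k). \<bar>bsetdist x (epi h) - bsetdist x (epi \<phi>)\<bar>)"
    have Sg: "Sg < 1 / real k" and Sh: "Sh < 1 / real k" using g h unfolding Sg_def Sh_def Vk_def by auto
    have pt: "\<bar>bsetdist x (epi c) - bsetdist x (epi \<phi>)\<bar> \<le> max Sg Sh" if x: "x \<in> bcball (real k)" for x
    proof -
      have up: "bsetdist x (epi c) \<le> bsetdist x (epi \<phi>)"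
      proof (rule bsetdist_ge[OF ne])
        fix y assume "y \<in> epi \<phi>"
        then show "bsetdist x (epi c) \<le> bdist x y" using sub by (intro bsetdist_le) auto
      qed
      have low: "min (bsetdist x (epi g)) (bsetdist x (epi h)) \<le> bsetdist x (epi c)"
      proof (rule bsetdist_ge[OF XM_epi_ne[OF cX]])
        fix y assume "y \<in> epi c"
        then obtain \<theta> b where y: "y = (\<theta>, b)" "c \<theta> \<le> ereal b" by (cases y) (auto simp: epi_def)
        have "min (g \<theta>) (h \<theta>) \<le> c \<theta>" unfolding c_def using comb_ge_min[of a "g \<theta>" "h \<theta>"] a0 a1 gn hn by auto
        then have "min (g \<theta>) (h \<theta>) \<le> ereal b" using y(2) by (rule order.trans)
        then have "y \<in> epi g \<or> y \<in> epi h" using y(1) by (auto simp: epi_def min_le_iff_disj)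
        then show "min (bsetdist x (epi g)) (bsetdist x (epi h)) \<le> bdist x y"
          using bsetdist_le[of y "epi g" x] bsetdist_le[of y "epi h" x] by (auto simp: min_le_iff_disj)
      qed
      have "\<bar>bsetdist x (epi g) - bsetdist x (epi \<phi>)\<bar> \<le> Sg"
        unfolding Sg_def by (rule sup_ge[OF XM_epi_ne[OF gX] ne x])
      moreover have "\<bar>bsetdist x (epi h) - bsetdist x (epi \<phi>)\<bar> \<le> Sh"
        unfolding Sh_def by (rule sup_ge[OF XM_epi_ne[OF hX] ne x])
      ultimately show ?thesis using up low by (simp add: min_def max_def split: if_splits) linarith?
    qed
    have "(SUP x\<in>bcball (real k). \<bar>bsetdist x (epi c) - bsetdist x (epi \<phi>)\<bar>) \<le> max Sg Sh"
      by (rule sup_le) (use pt in auto)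
    then have "c \<in> Vk k \<phi>" using Sg Sh cX unfolding Vk_def by auto
    then show ?thesis using cb cX unfolding c_def W_def by auto
  qed
qed



context FK begin

lemma P_cont: "continuous_on {L+\<epsilon>..R-\<epsilon>} (\<lambda>t. F t + e)"
proof -
  have "continuous_on {L<..<R} F"
    by (rule cont_conv[OF f_cv f_nn]) (use f_fin ord in auto)
  then have "continuous_on {L+\<epsilon>..R-\<epsilon>} F" by (rule continuous_on_subset) (use ord in auto)
  then show ?thesis by (intro continuous_intros)
qed

lemma W_open: "g \<in> XM \<Longrightarrow> below g \<phi> \<Longrightarrow> \<exists>m0\<ge>1. \<forall>m\<ge>m0. \<forall>h\<in>Vk m g. below h \<phi>"
  by (rule W_open_gen[OF ord(2) theta_l_phi theta_r_phi phi_eq P_cont])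

lemma Ak_open: "aw_open (Ak k \<epsilon> f)"
  unfolding aw_open_def
proof (intro conjI ballI)
  show "Ak k \<epsilon> f \<subseteq> XM" by (auto simp: Ak_def Vk_def)
  fix g assume gA: "g \<in> Ak k \<epsilon> f"
  have gX: "g \<in> XM" and gb: "below g \<phi>" using gA by (auto simp: Ak_def Vk_def W_def)
  define s where "s = (SUP x\<in>bcball (real k). \<bar>bsetdist x (epi g) - bsetdist x (epi \<phi>)\<bar>)"
  have s: "s < 1 / real k" using gA unfolding s_def Ak_def Vk_def by auto
  obtain m0 where m0: "m0 \<ge> 1" "\<forall>m\<ge>m0. \<forall>h\<in>Vk m g. below h \<phi>" using W_open[OF gX gb] by blast
  define dd where "dd = 1 / real k - s"
  have dd: "0 < dd" using s unfolding dd_def by simp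
  define m where "m = max (max m0 k) (nat \<lceil>1 / dd\<rceil> + 1)"
  have mk: "k \<le> m" "m0 \<le> m" unfolding m_def by auto
  have "1 / dd \<le> real (nat \<lceil>1 / dd\<rceil>)" by (rule real_nat_ceiling_ge)
  moreover have "real (nat \<lceil>1 / dd\<rceil> + 1) \<le> real m" unfolding m_def by simp
  ultimately have mdd: "1 / dd < real m" by simp
  have mpos: "0 < real m" using mk k1 by simp
  have im: "1 / real m < dd" using mdd dd mpos by (simp add: field_simps)
  show "\<exists>m\<ge>1. Vk m g \<subseteq> Ak k \<epsilon> f"
  proof (intro exI[of _ m] conjI subsetI)
    show "1 \<le> m" using mk k1 by simp
    fix h assume hV: "h \<in> Vk m g"
    have hX: "h \<in> XM" using hV by (simp add: Vk_def)
    define t where "t = (SUP x\<in>bcball (real m). \<bar>bsetdist x (epi h) - bsetdist x (epi g)\<bar>)"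
    have t: "t < 1 / real m" using hV unfolding t_def Vk_def by auto
    have pt: "\<bar>bsetdist x (epi h) - bsetdist x (epi \<phi>)\<bar> \<le> t + s" if x: "x \<in> bcball (real k)" for x
    proof -
      have xm: "x \<in> bcball (real m)" using x mk by (auto simp: bcball_def)
      have "\<bar>bsetdist x (epi h) - bsetdist x (epi g)\<bar> \<le> t"
        unfolding t_def by (rule sup_ge[OF XM_epi_ne[OF hX] XM_epi_ne[OF gX] xm])
      moreover have "\<bar>bsetdist x (epi g) - bsetdist x (epi \<phi>)\<bar> \<le> s"
        unfolding s_def by (rule sup_ge[OF XM_epi_ne[OF gX] epi_phi_ne x])
      ultimately show ?thesis by linarith
    qed
    have "(SUP x\<in>bcball (real k). \<bar>bsetdist x (epi h) - bsetdist x (epi \<phi>)\<bar>) \<le> t + s"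
      by (rule sup_le) (use pt in auto)
    moreover have "t + s < 1 / real k" using t im unfolding dd_def by linarith
    ultimately have "h \<in> Vk k \<phi>" using hX unfolding Vk_def by auto
    moreover have "h \<in> W \<phi>" using m0(2) mk hV hX unfolding W_def by auto
    ultimately show "h \<in> Ak k \<epsilon> f" unfolding Ak_def by auto
  qed
qed

lemma f_in_Ak: "f \<in> Ak k \<epsilon> f"
  unfolding Ak_def W_def using f_in_Vk f_below_phi fX by auto

lemma Ak_conv: "g \<in> Ak k \<epsilon> f \<Longrightarrow> h \<in> Ak k \<epsilon> f \<Longrightarrow> a \<in> {0..1} \<Longrightarrow>
   (\<lambda>\<theta>. ereal a * g \<theta> + ereal (1 - a) * h \<theta>) \<in> Ak k \<epsilon> f"
  unfolding Ak_def
  by (rule comb_Ak[OF theta_l_phi theta_r_phi _ _ epi_phi_ne]) (use ord phi_fin in auto)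

lemma Ak_sub:
  assumes kj: "k = 2 * j" and j1: "j \<ge> 1"
  shows "Ak k \<epsilon> f \<subseteq> Vk j f"
proof
  fix g assume gA: "g \<in> Ak k \<epsilon> f"
  have gX: "g \<in> XM" using gA by (auto simp: Ak_def Vk_def)
  define s where "s = (SUP x\<in>bcball (real k). \<bar>bsetdist x (epi g) - bsetdist x (epi \<phi>)\<bar>)"
  have s: "s < 1 / real k" using gA unfolding s_def Ak_def Vk_def by auto
  obtain c where c: "c < 1 / real k" "\<forall>x\<in>bcball (real k). \<bar>bsetdist x (epi f) - bsetdist x (epi \<phi>)\<bar> \<le> c"
    using dist_est by blast
  have pt: "\<bar>bsetdist x (epi g) - bsetdist x (epi f)\<bar> \<le> s + c" if x: "x \<in> bcball (real j)" for x
  proof -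
    have xk: "x \<in> bcball (real k)" using x kj by (auto simp: bcball_def)
    have "\<bar>bsetdist x (epi g) - bsetdist x (epi \<phi>)\<bar> \<le> s"
      unfolding s_def by (rule sup_ge[OF XM_epi_ne[OF gX] epi_phi_ne xk])
    then show ?thesis using c(2) xk by fastforce
  qed
  have "(SUP x\<in>bcball (real j). \<bar>bsetdist x (epi g) - bsetdist x (epi f)\<bar>) \<le> s + c"
    by (rule sup_le) (use pt in auto)
  moreover have "1 / real k + 1 / real k = 1 / real j" using kj j1 by simp
  ultimately show "g \<in> Vk j f" using gX s c(1) unfolding Vk_def by auto
qed

end



theorem mainTheorem6:
  fixes f :: "real \<Rightarrow> ereal" and eps :: "nat \<Rightarrow> real"
  assumes "f \<in> XM" and "f 0 = 1" and "dom_f f \<noteq> {0}"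
    and "\<And>k. k \<ge> 1 \<Longrightarrow> eps_ok f k (eps k)"
  shows "(\<forall>k\<ge>1. aw_open (Ak k (eps k) f) \<and> f \<in> Ak k (eps k) f \<and>
            (\<forall>g\<in>Ak k (eps k) f. \<forall>h\<in>Ak k (eps k) f. \<forall>a\<in>{0..1::real}.
               (\<lambda>\<theta>. ereal a * g \<theta> + ereal (1 - a) * h \<theta>) \<in> Ak k (eps k) f))
       \<and> (\<forall>U. aw_open U \<and> f \<in> U \<longrightarrow> (\<exists>k\<ge>1. Ak k (eps k) f \<subseteq> U))
       \<and> (\<forall>k\<ge>1. Ak (2 * k) (eps (2 * k)) f \<subseteq> Vk k f)"
proof -
  have I: "FK f k (eps k)" if "k \<ge> 1" for k
    using assms that unfolding FK_def by auto
  have P3: "\<forall>k\<ge>1. Ak (2 * k) (eps (2 * k)) f \<subseteq> Vk k f"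
  proof (intro allI impI)
    fix k :: nat assume k: "k \<ge> 1"
    then have "2 * k \<ge> 1" by simp
    show "Ak (2 * k) (eps (2 * k)) f \<subseteq> Vk k f"
      by (rule FK.Ak_sub[OF I[OF \<open>2 * k \<ge> 1\<close>] refl k])
  qed
  have P1: "\<forall>k\<ge>1. aw_open (Ak k (eps k) f) \<and> f \<in> Ak k (eps k) f \<and>
            (\<forall>g\<in>Ak k (eps k) f. \<forall>h\<in>Ak k (eps k) f. \<forall>a\<in>{0..1::real}.
               (\<lambda>\<theta>. ereal a * g \<theta> + ereal (1 - a) * h \<theta>) \<in> Ak k (eps k) f)"
    using FK.Ak_open[OF I] FK.f_in_Ak[OF I] FK.Ak_conv[OF I] by blast
  have P2: "\<forall>U. aw_open U \<and> f \<in> U \<longrightarrow> (\<exists>k\<ge>1. Ak k (eps k) f \<subseteq> U)"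
  proof (intro allI impI)
    fix U assume U: "aw_open U \<and> f \<in> U"
    then obtain j where j: "j \<ge> 1" "Vk j f \<subseteq> U" unfolding aw_open_def by blast
    have "Ak (2 * j) (eps (2 * j)) f \<subseteq> U" using P3 j by blast
    moreover have "2 * j \<ge> 1" using j by simp
    ultimately show "\<exists>k\<ge>1. Ak k (eps k) f \<subseteq> U" by blast
  qed
  show ?thesis using P1 P2 P3 by blast
qed


end
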